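(* Let $\mathfrak A$ be a finite dimensional $C^*$-algebra and $\Phi:\mathfrak A\to\mathfrak A$ a (not necessarily unital) $*$-endomorphism. Then $\sigma(\Phi)\subset\{0\}\cup\mathbb T$.
   Context: $\sigma(\Phi)$ is the spectrum (set of eigenvalues) of the linear map $\Phi$ on $\mathfrak A$; $\mathbb T=\{\lambda\in\mathbb C:|\lambda|=1\}$. *)

theory Defs
  imports "HOL-Analysis.Analysis"
begin

class cstar_algebra = real_normed_algebra + banach +
  fixes scaleC :: "complex \<Rightarrow> 'a \<Rightarrow> 'a"
    and cstar :: "'a \<Rightarrow> 'a"
  assumes scaleC_add_right: "scaleC a (x + y) = scaleC a x + scaleC a y"
    and scaleC_add_left: "scaleC (a + b) x = scaleC a x + scaleC b x"
    and scaleC_scaleC: "scaleC a (scaleC b x) = scaleC (a * b) x"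
    and scaleC_one: "scaleC 1 x = x"
    and scaleR_scaleC: "scaleR r x = scaleC (complex_of_real r) x"
    and norm_scaleC: "norm (scaleC a x) = cmod a * norm x"
    and mult_scaleC_left: "scaleC a x * y = scaleC a (x * y)"
    and mult_scaleC_right: "x * scaleC a y = scaleC a (x * y)"
    and cstar_cstar: "cstar (cstar x) = x"
    and cstar_add: "cstar (x + y) = cstar x + cstar y"
    and cstar_scaleC: "cstar (scaleC a x) = scaleC (cnj a) (cstar x)"
    and cstar_mult: "cstar (x * y) = cstar y * cstar x"
    and cstar_identity: "norm (cstar x * x) = (norm x)\<^sup>2"

definition cfinite_dim :: "'a::cstar_algebra itself \<Rightarrow> bool" where
  "cfinite_dim _ \<longleftrightarrow> (\<exists>B::'a set. finite B \<and>
      (\<forall>x. \<exists>c. x = (\<Sum>b\<in>B. scaleC (c b) b)))"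

definition star_endomorphism :: "('a::cstar_algebra \<Rightarrow> 'a) \<Rightarrow> bool" where
  "star_endomorphism \<Phi> \<longleftrightarrow>
     (\<forall>x y. \<Phi> (x + y) = \<Phi> x + \<Phi> y) \<and>
     (\<forall>a x. \<Phi> (scaleC a x) = scaleC a (\<Phi> x)) \<and>
     (\<forall>x y. \<Phi> (x * y) = \<Phi> x * \<Phi> y) \<and>
     (\<forall>x. \<Phi> (cstar x) = cstar (\<Phi> x))"

definition lin_spectrum :: "('a::cstar_algebra \<Rightarrow> 'a) \<Rightarrow> complex set" where
  "lin_spectrum \<Phi> = {c. \<exists>x. x \<noteq> 0 \<and> \<Phi> x = scaleC c x}"

end

theory Submission
  imports Defs
begin

interpretation V: vector_space "scaleC :: complex \<Rightarrow> 'a::cstar_algebra \<Rightarrow> 'a"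
  by unfold_locales (simp_all add: scaleC_add_right scaleC_add_left scaleC_scaleC scaleC_one)

lemma star_endo_linear:
  assumes "star_endomorphism (\<Phi> :: 'a::cstar_algebra \<Rightarrow> 'a)"
  shows "module_hom scaleC scaleC \<Phi>"
  using assms unfolding star_endomorphism_def
  by (intro module_hom.intro module_hom_axioms.intro V.module_axioms) auto

lemma eig_indep:
  fixes \<Phi> :: "'a::cstar_algebra \<Rightarrow> 'a"
  assumes lin: "module_hom scaleC scaleC \<Phi>"
    and fin: "finite F" and nz: "0 \<notin> F"
    and ev: "\<And>v. v \<in> F \<Longrightarrow> \<Phi> v = scaleC (e v) v"
    and inj: "inj_on e F"
  shows "\<forall>u. (\<Sum>v\<in>F. scaleC (u v) v) = 0 \<longrightarrow> (\<forall>v\<in>F. u v = 0)"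
  using fin nz ev inj
proof (induction F rule: finite_induct)
  case empty
  then show ?case by simp
next
  case (insert a F)
  show ?case
  proof (intro allI impI)
    fix u
    assume s: "(\<Sum>v\<in>insert a F. scaleC (u v) v) = 0"
    have s1: "scaleC (u a) a + (\<Sum>v\<in>F. scaleC (u v) v) = 0"
      using s insert by simp
    have "\<Phi> (scaleC (u a) a + (\<Sum>v\<in>F. scaleC (u v) v)) = 0"
      using s1 module_hom.zero[OF lin] by simp
    hence s2: "scaleC (u a * e a) a + (\<Sum>v\<in>F. scaleC (u v * e v) v) = 0"
      using insert.prems
      by (simp add: module_hom.add[OF lin] module_hom.sum[OF lin]
          module_hom.scale[OF lin] scaleC_scaleC)
    have s3: "scaleC (e a) (scaleC (u a) a + (\<Sum>v\<in>F. scaleC (u v) v)) = 0"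
      using s1 by simp
    hence s3': "scaleC (u a * e a) a + (\<Sum>v\<in>F. scaleC (u v * e a) v) = 0"
      by (simp add: V.scale_right_distrib V.scale_sum_right scaleC_scaleC mult.commute)
    have "(\<Sum>v\<in>F. scaleC (u v * (e v - e a)) v) = 0"
    proof -
      have "(\<Sum>v\<in>F. scaleC (u v * (e v - e a)) v)
          = (\<Sum>v\<in>F. scaleC (u v * e v) v) - (\<Sum>v\<in>F. scaleC (u v * e a) v)"
        by (simp add: right_diff_distrib V.scale_left_diff_distrib sum_subtractf)
      also have "\<dots> = 0" using s2 s3' by (metis add_left_cancel diff_self)
      finally show ?thesis .
    qed
    hence "\<forall>v\<in>F. u v * (e v - e a) = 0"
    proof -
      have h: "\<forall>u. (\<Sum>v\<in>F. scaleC (u v) v) = 0 \<longrightarrow> (\<forall>v\<in>F. u v = 0)"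
        using insert.IH insert.prems by (auto simp: inj_on_insert)
      show ?thesis
        using h[rule_format, of "\<lambda>v. u v * (e v - e a)"] \<open>(\<Sum>v\<in>F. scaleC (u v * (e v - e a)) v) = 0\<close>
        by blast
    qed
    moreover have "\<forall>v\<in>F. e v \<noteq> e a"
      using insert.prems(3) insert.hyps(2) by (auto simp: inj_on_def)
    ultimately have uF: "\<forall>v\<in>F. u v = 0" by simp
    hence "scaleC (u a) a = 0" using s1 by simp
    hence "u a = 0" using insert.prems(1) by simp
    with uF show "\<forall>v\<in>insert a F. u v = 0" by simp
  qed
qed

fun sq :: "'a::cstar_algebra \<Rightarrow> nat \<Rightarrow> 'a" where
  "sq y 0 = y" | "sq y (Suc k) = sq y k * sq y k"

lemma sq_sa: "cstar y = y \<Longrightarrow> cstar (sq y k) = sq y k"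
  by (induction k) (simp_all add: cstar_mult)

lemma sq_norm: "cstar y = y \<Longrightarrow> norm (sq y k) = norm y ^ (2^k)"
proof (induction k)
  case 0 then show ?case by simp
next
  case (Suc k)
  have "norm (sq y (Suc k)) = norm (cstar (sq y k) * sq y k)"
    using sq_sa[OF Suc.prems] by simp
  also have "\<dots> = (norm (sq y k))\<^sup>2" by (rule cstar_identity)
  finally show ?case using Suc by (simp add: power_mult[symmetric] power_Suc2 mult.commute)
qed

lemma sq_eig:
  assumes "star_endomorphism \<Phi>" "\<Phi> y = scaleC (complex_of_real r) y"
  shows "\<Phi> (sq y k) = scaleC (complex_of_real (r ^ (2^k))) (sq y k)"
proof (induction k)
  case 0 then show ?case using assms by simp
next
  case (Suc k)
  have m: "\<Phi> (a * b) = \<Phi> a * \<Phi> b" for a b using assms(1) by (simp add: star_endomorphism_def)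
  show ?case using Suc
    by (simp add: m mult_scaleC_left mult_scaleC_right scaleC_scaleC power_mult[symmetric]
         power_Suc2 mult.commute power_add[symmetric] mult_2)
qed

lemma pow_inj:
  fixes r :: real
  assumes "0 < r" "r \<noteq> 1" "r ^ m = r ^ n" shows "m = n"
proof (cases "1 < r")
  case True then show ?thesis using assms power_inject_exp by blast
next
  case False
  hence "1 < 1 / r" using assms by (simp add: field_simps)
  moreover have "(1/r) ^ m = (1/r) ^ n" using assms by (simp add: power_one_over)
  ultimately show ?thesis using power_inject_exp by blast
qed

lemma scaleC_cancel: "v \<noteq> (0::'a::cstar_algebra) \<Longrightarrow> scaleC a v = scaleC b v \<Longrightarrow> a = b"
proof -
  assume "v \<noteq> 0" "scaleC a v = scaleC b v"
  hence "scaleC (a - b) v = 0" by (simp add: V.scale_left_diff_distrib)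
  thus "a = b" using \<open>v \<noteq> 0\<close> by simp
qed

theorem proposition3p6:
  fixes \<Phi> :: "'a::cstar_algebra \<Rightarrow> 'a"
  assumes "cfinite_dim TYPE('a)"
    and "star_endomorphism \<Phi>"
  shows "lin_spectrum \<Phi> \<subseteq> {0} \<union> {z. cmod z = 1}"
proof
  fix c assume "c \<in> lin_spectrum \<Phi>"
  then obtain x where x0: "x \<noteq> 0" and ex: "\<Phi> x = scaleC c x" by (auto simp: lin_spectrum_def)
  show "c \<in> {0} \<union> {z. cmod z = 1}"
  proof (rule ccontr)
    assume "c \<notin> {0} \<union> {z. cmod z = 1}"
    hence c0: "c \<noteq> 0" and c1: "cmod c \<noteq> 1" by auto
    define r where "r = (cmod c)\<^sup>2"
    have r0: "0 < r" using c0 by (simp add: r_def)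
    have r1: "r \<noteq> 1" using c1 norm_ge_zero[of c] unfolding r_def by (smt (verit) power2_eq_1_iff)
    define y where "y = cstar x * x"
    have ysa: "cstar y = y" by (simp add: y_def cstar_mult cstar_cstar)
    have ynorm: "norm y = (norm x)\<^sup>2" by (simp add: y_def cstar_identity)
    hence yn0: "norm y > 0" using x0 by simp
    have hom: "module_hom scaleC scaleC \<Phi>" by (rule star_endo_linear[OF assms(2)])
    have "\<Phi> y = cstar (\<Phi> x) * \<Phi> x"
      using assms(2) by (simp add: y_def star_endomorphism_def)
    also have "\<dots> = scaleC (cnj c * c) y"
      by (simp add: ex cstar_scaleC mult_scaleC_left mult_scaleC_right scaleC_scaleC y_def mult.commute)
    also have "cnj c * c = complex_of_real r"
      by (simp add: r_def complex_norm_square[symmetric] mult.commute)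
    finally have ey: "\<Phi> y = scaleC (complex_of_real r) y" .
    have eig: "\<Phi> (sq y k) = scaleC (complex_of_real (r ^ (2^k))) (sq y k)" for k
      by (rule sq_eig[OF assms(2) ey])
    have nz: "sq y k \<noteq> 0" for k
    proof
      assume "sq y k = 0"
      hence "norm y ^ (2^k) = 0" using sq_norm[OF ysa, of k] by simp
      thus False using yn0 by simp
    qed
    obtain B :: "'a set" where fB: "finite B" and spB: "\<forall>x. \<exists>c. x = (\<Sum>b\<in>B. scaleC (c b) b)"
      using assms(1) by (auto simp: cfinite_dim_def)
    define N where "N = card B"
    define F where "F = sq y ` {..N}"
    have injsq: "inj_on (sq y) {..N}"
    proof (rule inj_onI)
      fix k l assume "sq y k = sq y l"
      hence "scaleC (complex_of_real (r ^ (2^k))) (sq y k) = scaleC (complex_of_real (r ^ (2^l))) (sq y k)"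
        using eig[of k] eig[of l] by metis
      hence "complex_of_real (r ^ (2^k)) = complex_of_real (r ^ (2^l))"
        using scaleC_cancel[OF nz] by blast
      hence "r ^ (2^k) = r ^ (2^l)" by (simp only: of_real_eq_iff)
      hence "(2::nat)^k = 2^l" using pow_inj r0 r1 by blast
      thus "k = l" by simp
    qed
    have cardF: "card F = N + 1" using injsq by (simp add: F_def card_image)
    define e where "e v = (SOME l. \<Phi> v = scaleC l v)" for v
    have e_sq: "e (sq y k) = complex_of_real (r ^ (2^k))" for k
    proof -
      have "\<Phi> (sq y k) = scaleC (e (sq y k)) (sq y k)"
        unfolding e_def by (rule someI_ex) (use eig in blast)
      thus ?thesis using eig[of k] scaleC_cancel[OF nz] by metis
    qed
    have injE: "inj_on e F"
    proof (rule inj_onI)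
      fix u v assume "u \<in> F" "v \<in> F" "e u = e v"
      then obtain k l where "u = sq y k" "v = sq y l" by (auto simp: F_def)
      with \<open>e u = e v\<close> have "r ^ (2^k) = r ^ (2^l)" by (simp add: e_sq del: of_real_power)
      hence "(2::nat)^k = 2^l" using pow_inj r0 r1 by blast
      thus "u = v" using \<open>u = sq y k\<close> \<open>v = sq y l\<close> by simp
    qed
    have indep: "V.independent F"
      unfolding V.independent_explicit_finite_subsets
    proof (rule allI, rule impI, rule impI)
      fix S assume "S \<subseteq> F" "finite S"
      show "\<forall>u. (\<Sum>v\<in>S. scaleC (u v) v) = 0 \<longrightarrow> (\<forall>v\<in>S. u v = 0)"
      proof (rule eig_indep[OF hom \<open>finite S\<close>, where e=e])
        show "0 \<notin> S" using \<open>S \<subseteq> F\<close> nz by (auto simp: F_def)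
        show "\<Phi> v = scaleC (e v) v" if "v \<in> S" for v
          using that \<open>S \<subseteq> F\<close> eig e_sq by (auto simp: F_def)
        show "inj_on e S" using injE \<open>S \<subseteq> F\<close> by (rule inj_on_subset)
      qed
    qed
    have "F \<subseteq> V.span B"
    proof
      fix v assume "v \<in> F"
      obtain d where "v = (\<Sum>b\<in>B. scaleC (d b) b)" using spB by blast
      thus "v \<in> V.span B" by (simp add: V.span_sum V.span_scale V.span_base)
    qed
    from V.independent_span_bound[OF fB indep this] have "card F \<le> card B" by simp
    thus False using cardF N_def by simp
  qed
qed

end
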